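(* Let $H$ be a finite-dimensional real Hilbert space, $f:H\to\mathbb{R}\cup\{+\infty\}$ a proper lower semicontinuous function and $\bar x\in\operatorname{dom}f$. The following are equivalent: (i) $\bar x$ is a strict local minimizer of order two for $f$; (ii) $0\in\partial_pf(\bar x)$ and there exists $\beta>0$ such that $f''_-(\bar x,0,h)\ge\beta$ holds uniformly with respect to $h\in S_H$; (iii) $0\in\partial_pf(\bar x)$ and there exists $\beta>0$ such that $f''_-(\bar x,0,h)\ge\beta$ for all $h\in S_H$; (iv) $0\in\partial_pf(\bar x)$ and $f''_-(\bar x,0,h)>0$ for all $h\in S_H$.
   Context: $S_H$ and $B_H$ are the unit sphere and closed unit ball of $H$; $B(x,\delta)$ is the open ball. $\bar x$ is a strict local minimizer of order two for $f$ if there exist $\beta,\delta>0$ with $f(x)\ge f(\bar x)+\frac{\beta}{2}\|x-\bar x\|^2$ for all $x\in B(\bar x,\delta)$. Proximal subdifferential: $\zeta\in\partial_p f(x)$ iff there exist $\sigma,\delta>0$ with $f(y)\ge f(x)+\langle\zeta,y-x\rangle-\frac{\sigma}{2}\|y-x\|^2$ whenever $\|y-x\|<\delta$. $\Delta_2 f(\bar x,p,t,u):=\frac{f(\bar x+tu)-f(\bar x)-t\langle p,u\rangle}{\frac12t^2}$, $f''_-(\bar x,p,h):=\liminf_{h'\to h,\,t\downarrow0}\Delta_2f(\bar x,p,t,h')$. "$f''_-(\bar x,p,h)\ge\beta$ holds uniformly with respect to $h\in A$" means: for every $\varepsilon>0$ there exists $\delta>0$ such that $\Delta_2f(\bar x,p,t,h)\ge\beta-\varepsilon$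 for all $t\in(0,\delta)$ and all $h\in A+\delta B_H$. *)

theory Defs
  imports "HOL-Analysis.Analysis" "HOL-Library.Extended_Real"
begin

text \<open>Extended-real-valued functions f : H -> R \<union> {+\<infinity>} are modelled as
  functions into ereal that never take the value -\<infinity>.\<close>

definition proper_fun :: "('a \<Rightarrow> ereal) \<Rightarrow> bool" where
  "proper_fun f \<longleftrightarrow> (\<forall>x. f x \<noteq> -\<infinity>) \<and> (\<exists>x. f x \<noteq> \<infinity>)"

definition lsc_fun :: "('a::topological_space \<Rightarrow> ereal) \<Rightarrow> bool" where
  "lsc_fun f \<longleftrightarrow> (\<forall>x. f x \<le> Liminf (at x) f)"

definition effdom :: "('a \<Rightarrow> ereal) \<Rightarrow> 'a set" where
  "effdom f = {x. f x < \<infinity>}"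

definition strict_local_min_order2 :: "('a::real_normed_vector \<Rightarrow> ereal) \<Rightarrow> 'a \<Rightarrow> bool" where
  "strict_local_min_order2 f xb \<longleftrightarrow>
     (\<exists>\<beta>>0. \<exists>\<delta>>0. \<forall>x\<in>ball xb \<delta>.
        f x \<ge> f xb + ereal (\<beta> / 2 * (norm (x - xb))\<^sup>2))"

definition prox_subdiff :: "('a::real_inner \<Rightarrow> ereal) \<Rightarrow> 'a \<Rightarrow> 'a set" where
  "prox_subdiff f x = {\<zeta>. \<exists>\<sigma>>0. \<exists>\<delta>>0. \<forall>y. norm (y - x) < \<delta> \<longrightarrow>
        f y \<ge> f x + ereal (inner \<zeta> (y - x) - \<sigma> / 2 * (norm (y - x))\<^sup>2)}"

definition Delta2 :: "('a::real_inner \<Rightarrow> ereal) \<Rightarrow> 'a \<Rightarrow> 'a \<Rightarrow> real \<Rightarrow> 'a \<Rightarrow> ereal" where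
  "Delta2 f xb p t u = (f (xb + t *\<^sub>R u) - f xb - ereal (t * inner p u)) / ereal (t\<^sup>2 / 2)"

definition lower_sod :: "('a::real_inner \<Rightarrow> ereal) \<Rightarrow> 'a \<Rightarrow> 'a \<Rightarrow> 'a \<Rightarrow> ereal" where
  "lower_sod f xb p h =
     Liminf (at (h, 0) within (UNIV \<times> {0<..})) (\<lambda>(h', t). Delta2 f xb p t h')"

definition unif_lower_sod_ge :: "('a::real_inner \<Rightarrow> ereal) \<Rightarrow> 'a \<Rightarrow> 'a \<Rightarrow> real \<Rightarrow> 'a set \<Rightarrow> bool" where
  "unif_lower_sod_ge f xb p \<beta> A \<longleftrightarrow>
     (\<forall>\<epsilon>>0. \<exists>\<delta>>0. \<forall>t\<in>{0<..<\<delta>}. \<forall>h\<in>{a + \<delta> *\<^sub>R b | a b. a \<in> A \<and> norm b \<le> 1}.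
        Delta2 f xb p t h \<ge> ereal (\<beta> - \<epsilon>))"

end

theory Submission
  imports Defs
begin

lemma delta2_ge:
  assumes t: "t > 0" and a: "f xb = ereal a" and nm: "f (xb + t *\<^sub>R h) \<noteq> -\<infinity>"
  shows "ereal r \<le> Delta2 f xb 0 t h \<longleftrightarrow> ereal (a + r * t\<^sup>2 / 2) \<le> f (xb + t *\<^sub>R h)"
proof (cases "f (xb + t *\<^sub>R h)")
  case (real v)
  have tp: "t\<^sup>2 / 2 > 0" using t by simp
  have "Delta2 f xb 0 t h = ereal ((v - a) / (t\<^sup>2 / 2))"
    unfolding Delta2_def using real a tp by simp
  moreover have "r \<le> (v - a) / (t\<^sup>2 / 2) \<longleftrightarrow> a + r * t\<^sup>2 / 2 \<le> v"
    using tp by (simp add: pos_le_divide_eq algebra_simps) argo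
  ultimately show ?thesis using real by simp
next
  case PInf
  have tp: "t\<^sup>2 / 2 > 0" using t by simp
  have "Delta2 f xb 0 t h = \<infinity>" unfolding Delta2_def using PInf a tp by simp
  then show ?thesis using PInf by simp
qed (use nm in simp)

lemma delta2_gt:
  assumes t: "t > 0" and a: "f xb = ereal a" and nm: "f (xb + t *\<^sub>R h) \<noteq> -\<infinity>"
  shows "ereal r < Delta2 f xb 0 t h \<longleftrightarrow> ereal (a + r * t\<^sup>2 / 2) < f (xb + t *\<^sub>R h)"
proof (cases "f (xb + t *\<^sub>R h)")
  case (real v)
  have tp: "t\<^sup>2 / 2 > 0" using t by simp
  have "Delta2 f xb 0 t h = ereal ((v - a) / (t\<^sup>2 / 2))"
    unfolding Delta2_def using real a tp by simp
  moreover have "r < (v - a) / (t\<^sup>2 / 2) \<longleftrightarrow> a + r * t\<^sup>2 / 2 < v"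
    using tp by (simp add: pos_less_divide_eq algebra_simps) argo
  ultimately show ?thesis using real by simp
next
  case PInf
  have tp: "t\<^sup>2 / 2 > 0" using t by simp
  have "Delta2 f xb 0 t h = \<infinity>" unfolding Delta2_def using PInf a tp by simp
  then show ?thesis using PInf by simp
qed (use nm in simp)

theorem corollary5p1:
  fixes f :: "'a::euclidean_space \<Rightarrow> ereal" and xb :: 'a
  assumes "proper_fun f" and "lsc_fun f" and "xb \<in> effdom f"
  shows "(strict_local_min_order2 f xb
            \<longleftrightarrow> (0 \<in> prox_subdiff f xb \<and> (\<exists>\<beta>>0. unif_lower_sod_ge f xb 0 \<beta> (sphere 0 1))))
       \<and> (strict_local_min_order2 f xb
            \<longleftrightarrow> (0 \<in> prox_subdiff f xb \<and> (\<exists>\<beta>>0. \<forall>h\<in>sphere 0 1. lower_sod f xb 0 h \<ge> ereal \<beta>)))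
       \<and> (strict_local_min_order2 f xb
            \<longleftrightarrow> (0 \<in> prox_subdiff f xb \<and> (\<forall>h\<in>sphere 0 1. lower_sod f xb 0 h > 0)))"
proof -
  have nm: "\<And>x. f x \<noteq> -\<infinity>" using assms(1) unfolding proper_fun_def by auto
  obtain a where a: "f xb = ereal a"
    using assms(3) nm[of xb] unfolding effdom_def by (cases "f xb") auto
  let ?I = "strict_local_min_order2 f xb"
  let ?P = "0 \<in> prox_subdiff f xb"
  let ?U = "\<exists>\<beta>>0. unif_lower_sod_ge f xb 0 \<beta> (sphere 0 1)"
  let ?T = "\<exists>\<beta>>0. \<forall>h\<in>sphere 0 1. lower_sod f xb 0 h \<ge> ereal \<beta>"
  let ?F = "\<forall>h\<in>sphere 0 1. lower_sod f xb 0 h > 0"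
  have IP: ?P if ?I
  proof -
    from that obtain \<beta> \<delta> where b: "\<beta> > 0" "\<delta> > 0" and
      m: "\<And>x. x \<in> ball xb \<delta> \<Longrightarrow> f x \<ge> f xb + ereal (\<beta> / 2 * (norm (x - xb))\<^sup>2)"
      unfolding strict_local_min_order2_def by blast
    have key: "\<forall>y. norm (y - xb) < \<delta> \<longrightarrow>
        f xb + ereal (inner 0 (y - xb) - 1 / 2 * (norm (y - xb))\<^sup>2) \<le> f y"
    proof (intro allI impI)
      fix y :: 'a assume "norm (y - xb) < \<delta>"
      then have "y \<in> ball xb \<delta>" by (simp add: dist_norm norm_minus_commute)
      then have "f y \<ge> f xb + ereal (\<beta> / 2 * (norm (y - xb))\<^sup>2)" by (rule m)
      moreover have "f xb + ereal (inner 0 (y - xb) - 1 / 2 * (norm (y - xb))\<^sup>2)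
          \<le> f xb + ereal (\<beta> / 2 * (norm (y - xb))\<^sup>2)"
        using b a by (simp add: order_trans[of _ 0] )
      ultimately show "f xb + ereal (inner 0 (y - xb) - 1 / 2 * (norm (y - xb))\<^sup>2) \<le> f y"
        using order_trans by blast
    qed
    show ?thesis unfolding prox_subdiff_def using key b(2) zero_less_one by blast
  qed
  have IU: ?U if ?I
  proof -
    from that obtain \<beta> \<delta> where b: "\<beta> > 0" "\<delta> > 0" and
      m: "\<And>x. x \<in> ball xb \<delta> \<Longrightarrow> f x \<ge> f xb + ereal (\<beta> / 2 * (norm (x - xb))\<^sup>2)"
      unfolding strict_local_min_order2_def by blast
    show ?thesis unfolding unif_lower_sod_ge_def
    proof (rule exI[of _ \<beta>], intro conjI allI impI ballI)
      fix \<epsilon> :: real assume e: "\<epsilon> > 0"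
      define d where "d = min (1/2) (min (\<delta>/2) (\<epsilon>/(2*\<beta>)))"
      have d: "d > 0" "d \<le> 1/2" "d \<le> \<delta>/2" "d \<le> \<epsilon>/(2*\<beta>)" using b e by (auto simp: d_def)
      show "\<exists>d>0. \<forall>t\<in>{0<..<d}. \<forall>h\<in>{a + d *\<^sub>R b |a b. a \<in> sphere 0 1 \<and> norm b \<le> 1}.
          ereal (\<beta> - \<epsilon>) \<le> Delta2 f xb 0 t h"
      proof (intro exI[of _ d] conjI ballI)
        fix t :: real and h :: 'a assume t: "t \<in> {0<..<d}" and h: "h \<in> {a + d *\<^sub>R b |a b. a \<in> sphere 0 1 \<and> norm b \<le> 1}"
        then obtain u v where uv: "h = u + d *\<^sub>R v" "norm u = 1" "norm v \<le> 1" by auto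
        have dv: "d * norm v \<le> d" using uv d mult_left_mono[of "norm v" 1 d] by auto
        have nv: "norm (d *\<^sub>R v) = d * norm v" using d by simp
        have n1: "norm h \<le> 1 + d"
          using uv(2) norm_triangle_ineq[of u "d *\<^sub>R v"] dv nv unfolding uv(1) by linarith
        have n2: "norm h \<ge> 1 - d"
          using uv(2) norm_triangle_ineq2[of u "- (d *\<^sub>R v)"] dv nv unfolding uv(1) norm_minus_cancel diff_minus_eq_add by linarith
        have tp: "t > 0" "t < d" using t by auto
        have "norm (t *\<^sub>R h) < \<delta>"
        proof -
          have "norm (t *\<^sub>R h) = t * norm h" using tp by simp
          also have "\<dots> \<le> t * 2" using n1 d tp by (intro mult_left_mono) auto
          also have "\<dots> < \<delta>" using tp d by auto
          finally show ?thesis .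
        qed
        then have "xb + t *\<^sub>R h \<in> ball xb \<delta>" by (simp add: dist_norm)
        from m[OF this] have mm: "f (xb + t *\<^sub>R h) \<ge> ereal (a + \<beta> / 2 * (t * norm h)\<^sup>2)"
          using a tp by simp
        have "(\<beta> - \<epsilon>) \<le> \<beta> * (norm h)\<^sup>2"
        proof -
          have "(1 - d)\<^sup>2 \<le> (norm h)\<^sup>2" using n2 d by (intro power_mono) auto
          moreover have "1 - 2 * d \<le> (1 - d)\<^sup>2" by (simp add: power2_eq_square algebra_simps)
          moreover have "\<beta> * (2 * d) \<le> \<epsilon>" using d(4) b by (simp add: field_simps)
          ultimately have "\<beta> * (1 - 2*d) \<le> \<beta> * (norm h)\<^sup>2"
            using b by (intro mult_left_mono) auto
          then show ?thesis using \<open>\<beta> * (2 * d) \<le> \<epsilon>\<close> by (simp add: algebra_simps)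
        qed
        then have "a + (\<beta> - \<epsilon>) * t\<^sup>2 / 2 \<le> a + \<beta> / 2 * (t * norm h)\<^sup>2"
          using tp by (simp add: power_mult_distrib)
        then have "ereal (a + (\<beta> - \<epsilon>) * t\<^sup>2 / 2) \<le> f (xb + t *\<^sub>R h)"
          using mm by (meson ereal_less_eq(3) order_trans)
        then show "ereal (\<beta> - \<epsilon>) \<le> Delta2 f xb 0 t h"
          using delta2_ge[OF tp(1) a nm[of "xb + t *\<^sub>R h"]] by blast
      qed (use d in auto)
    qed (use b in auto)
  qed
  have UT: ?T if ?U
  proof -
    from that obtain \<beta> where b: "\<beta> > 0" and u: "unif_lower_sod_ge f xb 0 \<beta> (sphere 0 1)" by blast
    show ?thesis
    proof (intro exI[of _ \<beta>] conjI ballI b)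
      fix h :: 'a assume h: "h \<in> sphere 0 1"
      show "ereal \<beta> \<le> lower_sod f xb 0 h" unfolding lower_sod_def le_Liminf_iff
      proof (intro allI impI)
        fix y assume y: "y < ereal \<beta>"
        obtain \<epsilon> where e: "\<epsilon> > 0" "y < ereal (\<beta> - \<epsilon>)"
        proof (cases y)
          case (real r) then show ?thesis using y that[of "(\<beta> - r)/2"] by (auto simp: field_simps)
        next
          case MInf then show ?thesis using that[of 1] by auto
        qed (use y in auto)
        from u e obtain d where d: "d > 0" and
          dd: "\<And>t h. t\<in>{0<..<d} \<Longrightarrow> h\<in>{a + d *\<^sub>R b |a b. a \<in> sphere 0 1 \<and> norm b \<le> 1}
            \<Longrightarrow> Delta2 f xb 0 t h \<ge> ereal (\<beta> - \<epsilon>)"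
          unfolding unif_lower_sod_ge_def by meson
        show "\<forall>\<^sub>F x in at (h, 0) within UNIV \<times> {0<..}. y < (case x of (h', t) \<Rightarrow> Delta2 f xb 0 t h')"
          unfolding eventually_at
        proof (intro exI[of _ d] conjI d ballI impI)
          fix p :: "'a \<times> real" assume p: "p \<in> UNIV \<times> {0<..}" "p \<noteq> (h, 0) \<and> dist p (h, 0) < d"
          obtain h' t where pp: "p = (h', t)" by (cases p)
          have "dist h' h < d" using dist_fst_le[of p "(h,0)"] p pp by auto
          moreover have "dist t 0 < d" using dist_snd_le[of p "(h,0)"] p pp by auto
          ultimately have t: "t \<in> {0<..<d}" and hh: "norm (h' - h) < d"
            using p pp by (auto simp: dist_norm)
          have n3: "norm ((1/d) *\<^sub>R (h' - h)) = norm (h' - h) / d" using d by (simp add: abs_of_pos)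
          have n4: "norm (h' - h) / d \<le> 1" using d hh by simp
          have "h' = h + d *\<^sub>R ((1/d) *\<^sub>R (h' - h))" using d by simp
          moreover have "norm ((1/d) *\<^sub>R (h' - h)) \<le> 1" unfolding n3 by (rule n4)
          ultimately have "h' \<in> {a + d *\<^sub>R b |a b. a \<in> sphere 0 1 \<and> norm b \<le> 1}" using h by blast
          from dd[OF t this] e show "y < (case p of (h', t) \<Rightarrow> Delta2 f xb 0 t h')"
            using pp by auto
        qed
      qed
    qed
  qed
  have TF: ?F if ?T
    using that by (meson ereal_less(2) less_le_trans)
  have FI: ?I if F: ?F
  proof -
    have "\<forall>h\<in>sphere (0::'a) 1. \<exists>c d. c > 0 \<and> d > 0 \<and>
        (\<forall>h' t. 0 < t \<and> t < d \<and> dist h' h < d \<longrightarrow> ereal c < Delta2 f xb 0 t h')"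
    proof
      fix h :: 'a assume h: "h \<in> sphere 0 1"
      obtain c where c: "0 < ereal c" "ereal c < lower_sod f xb 0 h"
        using ereal_dense2[OF F[rule_format, OF h]] by blast
      have "\<forall>\<^sub>F x in at (h, 0) within UNIV \<times> {0<..}. ereal c < (case x of (h', t) \<Rightarrow> Delta2 f xb 0 t h')"
      proof -
        obtain z where z: "ereal c < z" "z < lower_sod f xb 0 h" using dense[OF c(2)] by blast
        then have "z \<le> Liminf (at (h, 0) within UNIV \<times> {0<..}) (\<lambda>(h', t). Delta2 f xb 0 t h')"
          unfolding lower_sod_def by simp
        then show ?thesis unfolding le_Liminf_iff using z(1) by blast
      qed
      then obtain d where d: "d > 0" and
        dd: "\<And>p. p \<in> UNIV \<times> {0<..} \<Longrightarrow> p \<noteq> (h,0) \<and> dist p (h,0) < d \<Longrightarrow>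
           ereal c < (case p of (h', t) \<Rightarrow> Delta2 f xb 0 t h')"
        unfolding eventually_at by blast
      show "\<exists>c d. c > 0 \<and> d > 0 \<and>
        (\<forall>h' t. 0 < t \<and> t < d \<and> dist h' h < d \<longrightarrow> ereal c < Delta2 f xb 0 t h')"
      proof (rule exI[of _ c], rule exI[of _ "d/2"], intro conjI allI impI)
        fix h' :: 'a and t :: real assume ht: "0 < t \<and> t < d/2 \<and> dist h' h < d/2"
        have "dist (h', t) (h, 0) \<le> dist h' h + dist t 0"
          unfolding dist_Pair_Pair by (rule sqrt_sum_squares_le_sum) auto
        also have "\<dots> < d" using ht by (simp add: dist_norm)
        finally show "ereal c < Delta2 f xb 0 t h'" using dd[of "(h', t)"] ht by auto
      qed (use c d in auto)
    qed
    then obtain C D where CD: "\<And>h. h \<in> sphere (0::'a) 1 \<Longrightarrow> C h > 0 \<and> D h > 0 \<and>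
        (\<forall>h' t. 0 < t \<and> t < D h \<and> dist h' h < D h \<longrightarrow> ereal (C h) < Delta2 f xb 0 t h')"
      by metis
    obtain T where T: "T \<subseteq> sphere 0 1" "finite T" "sphere 0 1 \<subseteq> (\<Union>c\<in>T. ball c (D c))"
      by (rule compactE_image[of "sphere (0::'a) 1" "sphere 0 1" "\<lambda>c. ball c (D c)"])
         (use CD in auto)
    define c where "c = Min (insert 1 (C ` T))"
    define d where "d = Min (insert 1 (D ` T))"
    have cpos: "c > 0" unfolding c_def using T CD by (subst Min_gr_iff) auto
    have dpos: "d > 0" unfolding d_def using T CD by (subst Min_gr_iff) auto
    have cle: "\<And>h. h \<in> T \<Longrightarrow> c \<le> C h" unfolding c_def using T by auto
    have dle: "\<And>h. h \<in> T \<Longrightarrow> d \<le> D h" unfolding d_def using T by auto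
    show ?thesis unfolding strict_local_min_order2_def
    proof (rule exI[of _ c], rule conjI[OF cpos], rule exI[of _ d], rule conjI[OF dpos], intro ballI)
      fix x assume x: "x \<in> ball xb d"
      show "f xb + ereal (c / 2 * (norm (x - xb))\<^sup>2) \<le> f x"
      proof (cases "x = xb")
        case True then show ?thesis using a by simp
      next
        case False
        define t where "t = norm (x - xb)"
        define h where "h = (1/t) *\<^sub>R (x - xb)"
        have t: "t > 0" "t < d" using False x by (auto simp: t_def dist_norm norm_minus_commute)
        have hs: "h \<in> sphere 0 1" using t by (simp add: h_def t_def)
        have xe: "x = xb + t *\<^sub>R h" using t by (simp add: h_def)
        obtain k where k: "k \<in> T" "h \<in> ball k (D k)" using T hs by blast
        have "dist h k < D k" using k by (simp add: dist_commute)
        moreover have "t < D k" using t dle[OF k(1)] by simp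
        ultimately have "ereal (C k) < Delta2 f xb 0 t h" using CD[of k] T k t by auto
        then have "ereal c < Delta2 f xb 0 t h" using cle[OF k(1)] by (meson ereal_less_eq(3) le_less_trans)
        then have "ereal (a + c * t\<^sup>2 / 2) < f (xb + t *\<^sub>R h)" using delta2_gt[OF t(1) a nm[of "xb + t *\<^sub>R h"]] by blast
        then have "ereal (a + c * t\<^sup>2 / 2) < f x" using xe by simp
        then show ?thesis using a by (simp add: t_def)
      qed
    qed
  qed
  show ?thesis using IP IU UT TF FI by blast
qed

end
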